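(* $z_2(4,4)\ge 10$.
   Context: Double Zarankiewicz number: consider configurations $G=([m],[n],E_1\cup E_2)$ where $[m]=\{1,\dots,m\}$, $E_1\subseteq[m]\times[n]$ is a set of 1-edges (cells) and $E_2$ is a set of 2-edges $(i,j;k,l)$ with $i,k\in[m]$, $j,l\in[n]$, $i\ne k$, $j\ne l$; the cells $(i,j)$ and $(k,l)$ are the two halves of this 2-edge. Simplicity condition: the halves of all 2-edges are pairwise distinct cells and none of them belongs to $E_1$. A cell is occupied if it lies in $E_1$ or is a half of some 2-edge. $G$ contains a generalized $C_4$-cycle if (1) there are four 1-edges $(i,j),(i,l),(k,j),(k,l)\in E_1$ with $i\ne k$, $j\ne l$; or (2) there is a 2-edge $(i,j;k,l)\in E_2$ whose two opposite cells $(i,l)$ and $(k,j)$ are both occupied; or (3) there are a 2-edge $(i,j;p,q)\in E_2$ and a cell $(k,l)$ such that the five cells $(k,l),(k,j),(k,q),(i,l),(p,l)$ are pairwise distinct and all occupied. $z_2(m,n)$ is the maximum of $|E_1|+|E_2|$ over all such $G$ satisfying the simplicity condition and containing no generalized $C_4$-cycle. *)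

theory Defs
  imports Main
begin

type_synonym cell = "nat \<times> nat"
type_synonym edge2 = "cell \<times> cell"  (* ((i,j),(k,l)) is the 2-edge (i,j;k,l) *)

definition cells :: "nat \<Rightarrow> nat \<Rightarrow> cell set" where
  "cells m n = {1..m} \<times> {1..n}"

definition halves :: "edge2 \<Rightarrow> cell set" where
  "halves e = {fst e, snd e}"

definition simple_config :: "nat \<Rightarrow> nat \<Rightarrow> cell set \<Rightarrow> edge2 set \<Rightarrow> bool" where
  "simple_config m n E1 E2 \<longleftrightarrow>
     E1 \<subseteq> cells m n \<and>
     (\<forall>((i,j),(k,l)) \<in> E2. (i,j) \<in> cells m n \<and> (k,l) \<in> cells m n \<and> i \<noteq> k \<and> j \<noteq> l) \<and>
     (\<forall>e\<in>E2. \<forall>e'\<in>E2. e \<noteq> e' \<longrightarrow> halves e \<inter> halves e' = {}) \<and>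
     (\<forall>e\<in>E2. halves e \<inter> E1 = {})"

definition occupied :: "cell set \<Rightarrow> edge2 set \<Rightarrow> cell \<Rightarrow> bool" where
  "occupied E1 E2 c \<longleftrightarrow> c \<in> E1 \<or> (\<exists>e\<in>E2. c \<in> halves e)"

definition has_gen_C4 :: "cell set \<Rightarrow> edge2 set \<Rightarrow> bool" where
  "has_gen_C4 E1 E2 \<longleftrightarrow>
     (\<exists>i j k l. i \<noteq> k \<and> j \<noteq> l \<and> (i,j) \<in> E1 \<and> (i,l) \<in> E1 \<and> (k,j) \<in> E1 \<and> (k,l) \<in> E1) \<or>
     (\<exists>i j k l. ((i,j),(k,l)) \<in> E2 \<and> occupied E1 E2 (i,l) \<and> occupied E1 E2 (k,j)) \<or>
     (\<exists>i j p q k l. ((i,j),(p,q)) \<in> E2 \<and>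
        distinct [(k,l),(k,j),(k,q),(i,l),(p,l)] \<and>
        (\<forall>c \<in> {(k,l),(k,j),(k,q),(i,l),(p,l)}. occupied E1 E2 c))"

definition z2 :: "nat \<Rightarrow> nat \<Rightarrow> nat" where
  "z2 m n = Max {card E1 + card E2 | E1 E2.
                   simple_config m n E1 E2 \<and> \<not> has_gen_C4 E1 E2}"

end

theory Submission
  imports Defs
begin

definition W1 :: "cell set" where
  "W1 = {(1,1),(4,4),(1,3),(3,2),(3,1),(2,4),(3,4),(4,3)}"
definition W2 :: "edge2 set" where
  "W2 = {((2,1),(1,2)),((4,2),(2,3))}"

lemma occW: "occupied W1 W2 c \<longleftrightarrow> c \<in> {(1,1),(4,4),(1,3),(3,2),(3,1),(2,4),(3,4),(4,3),(2,1),(1,2),(4,2),(2,3)}"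
  by (auto simp: occupied_def W1_def W2_def halves_def)

lemma simpW: "simple_config 4 4 W1 W2"
  by (auto simp: simple_config_def W1_def W2_def halves_def cells_def)

lemma c1a: "\<forall>(i,j)\<in>W1. \<forall>(k,l)\<in>W1. i \<noteq> k \<and> j \<noteq> l \<longrightarrow> \<not> ((i,l) \<in> W1 \<and> (k,j) \<in> W1)"
  unfolding W1_def by simp
lemma c1: "\<not>(\<exists>i j k l. i \<noteq> k \<and> j \<noteq> l \<and> (i,j) \<in> W1 \<and> (i,l) \<in> W1 \<and> (k,j) \<in> W1 \<and> (k,l) \<in> W1)"
  using c1a by fast
lemma memW2: "(x \<in> W2) \<longleftrightarrow> x = ((2,1),(1,2)) \<or> x = ((4,2),(2,3))" by (auto simp: W2_def)
definition OccS :: "cell set" where "OccS = {(1,1),(4,4),(1,3),(3,2),(3,1),(2,4),(3,4),(4,3),(2,1),(1,2),(4,2),(2,3)}"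
lemma occW': "occupied W1 W2 c \<longleftrightarrow> c \<in> OccS" unfolding occW OccS_def ..
lemma n22: "(2,2) \<notin> OccS" by (simp add: OccS_def)
lemma c2: "\<not>(\<exists>i j k l. ((i,j),(k,l)) \<in> W2 \<and> occupied W1 W2 (i,l) \<and> occupied W1 W2 (k,j))"
proof
  assume "\<exists>i j k l. ((i,j),(k,l)) \<in> W2 \<and> occupied W1 W2 (i,l) \<and> occupied W1 W2 (k,j)"
  then obtain i j k l where e: "((i,j),(k,l)) \<in> W2" and o: "(i,l) \<in> OccS" "(k,j) \<in> OccS"
    unfolding occW' by blast
  from e have "(i=2 \<and> j=1 \<and> k=1 \<and> l=2) \<or> (i=4 \<and> j=2 \<and> k=2 \<and> l=3)" unfolding memW2 by simp
  thus False using o n22 by auto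
qed
lemma c3a: "\<forall>(k,l)\<in>OccS. \<not> (distinct [(k,l),(k,1),(k,2),(2,l),(1,l)] \<and> (k,1)\<in>OccS \<and> (k,2)\<in>OccS \<and> (2,l)\<in>OccS \<and> (1,l)\<in>OccS)"
  unfolding OccS_def by simp
lemma c3b: "\<forall>(k,l)\<in>OccS. \<not> (distinct [(k,l),(k,2),(k,3),(4,l),(2,l)] \<and> (k,2)\<in>OccS \<and> (k,3)\<in>OccS \<and> (4,l)\<in>OccS \<and> (2,l)\<in>OccS)"
  unfolding OccS_def by simp
lemma c3: "\<not>(\<exists>i j p q k l. ((i,j),(p,q)) \<in> W2 \<and>
        distinct [(k,l),(k,j),(k,q),(i,l),(p,l)] \<and>
        (\<forall>c \<in> {(k,l),(k,j),(k,q),(i,l),(p,l)}. occupied W1 W2 c))"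
proof
  assume "\<exists>i j p q k l. ((i,j),(p,q)) \<in> W2 \<and>
        distinct [(k,l),(k,j),(k,q),(i,l),(p,l)] \<and>
        (\<forall>c \<in> {(k,l),(k,j),(k,q),(i,l),(p,l)}. occupied W1 W2 c)"
  then obtain i j p q k l where e: "((i,j),(p,q)) \<in> W2" and d: "distinct [(k,l),(k,j),(k,q),(i,l),(p,l)]"
    and o0: "\<forall>c \<in> {(k,l),(k,j),(k,q),(i,l),(p,l)}. c \<in> OccS"
    unfolding occW' by blast
  from o0 have o: "(k,l)\<in>OccS" "(k,j)\<in>OccS" "(k,q)\<in>OccS" "(i,l)\<in>OccS" "(p,l)\<in>OccS"
    by simp_all
  from e have "(i=2 \<and> j=1 \<and> p=1 \<and> q=2) \<or> (i=4 \<and> j=2 \<and> p=2 \<and> q=3)" unfolding memW2 by simp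
  thus False
  proof
    assume h: "i=2 \<and> j=1 \<and> p=1 \<and> q=2"
    show False using c3a o d h by fastforce
  next
    assume h: "i=4 \<and> j=2 \<and> p=2 \<and> q=3"
    show False using c3b o d h by fastforce
  qed
qed
lemma noC4: "\<not> has_gen_C4 W1 W2"
  unfolding has_gen_C4_def using c1 c2 c3 by blast
lemma cardW: "card W1 + card W2 = 10"
  by (simp add: W1_def W2_def)

lemma fin: "finite {card E1 + card E2 | E1 E2. simple_config 4 4 E1 E2 \<and> \<not> has_gen_C4 E1 E2}"
proof -
  have "{card E1 + card E2 | E1 E2. simple_config 4 4 E1 E2 \<and> \<not> has_gen_C4 E1 E2}
     \<subseteq> (\<lambda>(E1,E2). card E1 + card E2) ` (Pow (cells 4 4) \<times> Pow (cells 4 4 \<times> cells 4 4))"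
    by (auto simp: simple_config_def image_iff)
  moreover have "finite (cells 4 4)" by (simp add: cells_def)
  hence "finite (Pow (cells 4 4) \<times> Pow (cells 4 4 \<times> cells 4 4))" by simp
  ultimately show ?thesis using finite_subset finite_imageI by blast
qed

theorem theorem3p1:
  shows "z2 4 4 \<ge> 10"
  unfolding z2_def
proof -
  have "10 \<in> {card E1 + card E2 | E1 E2. simple_config 4 4 E1 E2 \<and> \<not> has_gen_C4 E1 E2}"
    unfolding mem_Collect_eq cardW[symmetric] using simpW noC4 by blast
  thus "10 \<le> Max {card E1 + card E2 | E1 E2. simple_config 4 4 E1 E2 \<and> \<not> has_gen_C4 E1 E2}"
    using Max_ge[OF fin] by blast
qed

end
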